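(* Let $m \ge 2$ and $n \ge 2m+1$ be integers, and write $p_j = n-2m+2j$. Then for every real $r$ with $|r|<1$, $$\int_{-1}^1 \frac{U_n(s)(1-s^2)^{m-\frac{1}{2}}}{(s-r)^4}\,ds = (-1)^{m}\left(\frac{1}{2}\right)^{2m+1}\frac{1}{3}\frac{\pi}{(1-r^2)^2}\sum_{j=0}^{2m-2}(-1)^j\binom{2m-2}{j}(p_j+3)\Big\{(p_j+4)(p_j+5)U_{p_j}(r)-\big[2p_j^2+12p_j+10\big]U_{p_j+2}(r)+(p_j+2)(p_j+1)U_{p_j+4}(r)\Big\},$$ where the integral is a Hadamard finite-part integral.
   Context: $U_k(s)=\frac{\sin((k+1)\cos^{-1}s)}{\sin(\cos^{-1}s)}$ is the Tchebyshev polynomial of the second kind. For a positive integer $\alpha\ge 2$ and $|r|<1$, the integral $\int_{-1}^1 \frac{D(s)}{(s-r)^\alpha}ds$ is understood in the Hadamard finite-part sense; in particular it satisfies $\int_{-1}^1 \frac{D(s)}{(s-r)^{\alpha}}ds=\frac{1}{\alpha-1}\frac{d}{dr}\int_{-1}^1\frac{D(s)}{(s-r)^{\alpha-1}}ds$, where for $\alpha-1=1$ the right-hand integral is a Cauchy principal value. $\binom{a}{j}=\frac{a!}{j!(a-j)!}$. *)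

theory Defs
  imports "HOL-Analysis.Analysis"
begin

definition chebU :: "nat \<Rightarrow> real \<Rightarrow> real" where
  "chebU k s = sin ((real k + 1) * arccos s) / sin (arccos s)"

definition cpv_int :: "(real \<Rightarrow> real) \<Rightarrow> real \<Rightarrow> real" where
  "cpv_int D r = Lim (at_right 0)
     (\<lambda>e. integral {-1..r-e} (\<lambda>s. D s / (s - r)) + integral {r+e..1} (\<lambda>s. D s / (s - r)))"

text \<open>Hadamard finite-part integral of D(s)/(s-r)^alpha over [-1,1], alpha >= 1,
  defined recursively: order 1 is the Cauchy principal value, and
  order alpha = 1/(alpha-1) * d/dr of order alpha-1.\<close>
fun hadamard_fp :: "nat \<Rightarrow> (real \<Rightarrow> real) \<Rightarrow> real \<Rightarrow> real" where
  "hadamard_fp (Suc 0) D r = cpv_int D r"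
| "hadamard_fp (Suc (Suc k)) D r = deriv (hadamard_fp (Suc k) D) r / (real k + 1)"

end

theory Submission
  imports Defs
begin

lemma sin_pow_expand:
  fixes x t :: real and M :: nat
  shows "sin x * sin t ^ (2*M) = (-1)^M / 4^M *
     (\<Sum>j\<le>2*M. (-1)^j * real (2*M choose j) * sin (x + (2 * real j - 2 * real M) * t))"
proof -
  have w: "complex_of_real (2 * sin t) * \<i> = cis t + (- cis (-t))"
    by (simp add: complex_eq_iff)
  have "(complex_of_real (2 * sin t) * \<i>)^(2*M) =
      (\<Sum>k\<le>2*M. of_nat (2*M choose k) * cis t ^ k * (- cis (-t))^(2*M-k))"
    unfolding w by (rule binomial_ring)
  also have "... = (\<Sum>k\<le>2*M. complex_of_real ((-1)^k * real (2*M choose k)) * cis ((2 * real k - 2 * real M) * t))"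
  proof (rule sum.cong[OF refl])
    fix k assume "k \<in> {..2*M}"
    then have k: "k \<le> 2*M" by simp
    have e: "(-1::complex)^(2*M-k) = (-1)^k"
      using k by (simp add: minus_one_power_iff)
    have "(- cis (-t))^(2*M-k) = (-1)^(2*M-k) * cis (real (2*M-k) * (-t))"
      by (simp only: power_minus[of "cis (-t)"] Complex.DeMoivre)
    also have "... = (-1)^k * cis (real (2*M-k) * (-t))" using e by simp
    finally have h: "(- cis (-t))^(2*M-k) = (-1)^k * cis (real (2*M-k) * (-t))" .
    have "cis t ^ k * cis (real (2*M-k) * (-t)) = cis ((2 * real k - 2 * real M) * t)"
      using k by (simp add: Complex.DeMoivre cis_mult of_nat_diff algebra_simps)
    then show "of_nat (2*M choose k) * cis t ^ k * (- cis (-t))^(2*M-k) =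
      complex_of_real ((-1)^k * real (2*M choose k)) * cis ((2 * real k - 2 * real M) * t)"
      unfolding h by (simp add: algebra_simps)
  qed
  finally have S: "(complex_of_real (2 * sin t) * \<i>)^(2*M) = (\<Sum>k\<le>2*M. complex_of_real ((-1)^k * real (2*M choose k)) * cis ((2 * real k - 2 * real M) * t))" .
  have L: "(complex_of_real (2 * sin t) * \<i>)^(2*M) = complex_of_real ((-1)^M * 4^M * sin t ^ (2*M))"
    by (simp add: power_mult_distrib power_mult power_minus[of "4 * (complex_of_real (sin t))\<^sup>2"])
  have "sin x * sin t ^ (2*M) = Im (cis x * complex_of_real (sin t ^ (2*M)))"
    by simp
  also have "complex_of_real (sin t ^ (2*M)) = complex_of_real ((-1)^M / 4^M) * (complex_of_real (2 * sin t) * \<i>)^(2*M)"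
    unfolding L by (simp add: field_simps)
  also have "cis x * (complex_of_real ((-1)^M / 4^M) * (complex_of_real (2 * sin t) * \<i>)^(2*M))
     = complex_of_real ((-1)^M / 4^M) * (\<Sum>k\<le>2*M. complex_of_real ((-1)^k * real (2*M choose k)) * cis (x + (2 * real k - 2 * real M) * t))"
    unfolding S by (simp add: sum_distrib_left cis_mult[symmetric] mult_ac)
  also have "Im ... = (-1)^M / 4^M *
     (\<Sum>j\<le>2*M. (-1)^j * real (2*M choose j) * sin (x + (2 * real j - 2 * real M) * t))"
    by (simp add: Im_sum)
  finally show ?thesis .
qed

definition pvtr :: "(real \<Rightarrow> real) \<Rightarrow> real \<Rightarrow> real \<Rightarrow> real" where
  "pvtr f r e = integral {-1..r-e} (\<lambda>s. f s / (s - r)) + integral {r+e..1} (\<lambda>s. f s / (s - r))"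

lemma pv_limit:
  fixes g G :: "real \<Rightarrow> real"
  assumes r: "-1 < r" "r < 1"
    and cont: "continuous_on ({-1..1} - {r}) G"
    and der: "\<And>s. -1 < s \<Longrightarrow> s < 1 \<Longrightarrow> s \<noteq> r \<Longrightarrow> (G has_real_derivative g s) (at s)"
    and lim: "((\<lambda>e. G (r-e) - G (r+e)) \<longlongrightarrow> 0) (at_right 0)"
  shows "((\<lambda>e. integral {-1..r-e} g + integral {r+e..1} g) \<longlongrightarrow> G 1 - G (-1)) (at_right 0)"
proof -
  have ev: "eventually (\<lambda>e. e \<in> {0<..<min (1+r) (1-r)}) (at_right (0::real))"
    using r by (intro eventually_at_right_real) auto
  have eq: "eventually (\<lambda>e. (G 1 - G (-1)) + (G (r-e) - G (r+e)) = integral {-1..r-e} g + integral {r+e..1} g) (at_right 0)"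
    using ev
  proof (rule eventually_mono)
    fix e assume e: "e \<in> {0<..<min (1+r) (1-r)}"
    have i1: "(g has_integral G (r-e) - G (-1)) {-1..r-e}"
    proof (rule fundamental_theorem_of_calculus_interior)
      show "-1 \<le> r-e" using e by auto
      show "continuous_on {-1..r-e} G" using e by (intro continuous_on_subset[OF cont]) auto
      fix x assume "x \<in> {-1<..<r-e}" then show "(G has_vector_derivative g x) (at x)"
        using e der[of x] by (simp add: has_real_derivative_iff_has_vector_derivative)
    qed
    have i2: "(g has_integral G 1 - G (r+e)) {r+e..1}"
    proof (rule fundamental_theorem_of_calculus_interior)
      show "r+e \<le> 1" using e by auto
      show "continuous_on {r+e..1} G" using e by (intro continuous_on_subset[OF cont]) auto
      fix x assume "x \<in> {r+e<..<1}" then show "(G has_vector_derivative g x) (at x)"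
        using e r der[of x] by (simp add: has_real_derivative_iff_has_vector_derivative)
    qed
    show "(G 1 - G (-1)) + (G (r-e) - G (r+e)) = integral {-1..r-e} g + integral {r+e..1} g"
      using integral_unique[OF i1] integral_unique[OF i2] by simp
  qed
  have "((\<lambda>e. (G 1 - G (-1)) + (G (r-e) - G (r+e))) \<longlongrightarrow> (G 1 - G(-1)) + 0) (at_right 0)"
    by (intro tendsto_add tendsto_const lim)
  then show ?thesis using tendsto_cong[OF eq] by simp
qed

lemma cos_sub_cos: "cos ((a - 1) * x) - cos ((a + 1) * x) = 2 * sin (a * x) * sin (x::real)"
  by (simp add: algebra_simps cos_add cos_diff)

lemma aux_div: "a \<noteq> 0 \<Longrightarrow> b \<noteq> 0 \<Longrightarrow> w \<noteq> 0 \<Longrightarrow>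
  (c1 * (a * inverse (- w)) / a - c2 * (b * inverse (- w)) / b) / 2 = (c2 - c1)/(2*(w::real))"
  by (simp add: field_simps)

lemma sin_arccos_antideriv:
  fixes K :: nat assumes K: "K \<ge> 1"
  defines "F \<equiv> \<lambda>s. (sin ((real K + 1) * arccos s) / (real K + 1) -
      (if K = 1 then arccos s else sin ((real K - 1) * arccos s) / (real K - 1))) / 2"
  shows "continuous_on {-1..1} F"
    and "\<And>s. -1 < s \<Longrightarrow> s < 1 \<Longrightarrow> (F has_real_derivative sin (real K * arccos s)) (at s)"
    and "F 1 - F (-1) = (if K = 1 then pi/2 else 0)"
proof -
  show "continuous_on {-1..1} F"
    unfolding F_def by (cases "K = 1") (auto intro!: continuous_intros)
next
  fix s :: real assume s: "-1 < s" "s < 1"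
  have w: "sqrt (1 - s\<^sup>2) = sin (arccos s)" using s by (simp add: sin_arccos)
  have wp: "sin (arccos s) \<noteq> 0" using s by (simp add: sin_arccos_nonzero)
  have d: "\<And>a. ((\<lambda>s. sin (a * arccos s)) has_real_derivative cos (a * arccos s) * (a * inverse (- sqrt (1 - s\<^sup>2)))) (at s)"
    using s by (auto intro!: derivative_eq_intros DERIV_arccos)
  have da: "(arccos has_real_derivative inverse (- sqrt (1 - s\<^sup>2))) (at s)"
    using s by (intro DERIV_arccos) auto
  show "(F has_real_derivative sin (real K * arccos s)) (at s)"
  proof (cases "K = 1")
    case True
    have "(F has_real_derivative (cos (2 * arccos s) * (2 * inverse (- sqrt (1 - s\<^sup>2))) / 2 - inverse (- sqrt (1 - s\<^sup>2))) / 2) (at s)"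
      unfolding F_def True using d[of 2] da s by (auto intro!: derivative_eq_intros)
    moreover have "(cos (2 * arccos s) * (2 * inverse (- sqrt (1 - s\<^sup>2))) / 2 - inverse (- sqrt (1 - s\<^sup>2))) / 2
       = sin (real K * arccos s)"
      unfolding w True using wp cos_sub_cos[of 1 "arccos s"]
      by (simp add: field_simps)
    ultimately show ?thesis by simp
  next
    case False
    have "(F has_real_derivative (cos ((real K + 1) * arccos s) * ((real K + 1) * inverse (- sqrt (1 - s\<^sup>2))) / (real K + 1)
       - cos ((real K - 1) * arccos s) * ((real K - 1) * inverse (- sqrt (1 - s\<^sup>2))) / (real K - 1)) / 2) (at s)"
      unfolding F_def using False d s by (auto intro!: derivative_eq_intros)
    moreover have "(cos ((real K + 1) * arccos s) * ((real K + 1) * inverse (- sqrt (1 - s\<^sup>2))) / (real K + 1)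
       - cos ((real K - 1) * arccos s) * ((real K - 1) * inverse (- sqrt (1 - s\<^sup>2))) / (real K - 1)) / 2
       = sin (real K * arccos s)"
    proof -
      have k1: "real K - 1 \<noteq> 0" using K False by simp
      have k2: "real K + 1 \<noteq> 0" by simp
      show ?thesis unfolding w aux_div[OF k2 k1 wp]
        by (simp only: cos_sub_cos) (simp add: wp)
    qed
    ultimately show ?thesis by simp
  qed
next
  have a: "sin ((real K + 1) * pi) = 0" using sin_npi[of "K+1"] by (simp add: add.commute)
  have b: "K \<noteq> 1 \<Longrightarrow> sin ((real K - 1) * pi) = 0" using sin_npi[of "K-1"] K by (simp add: of_nat_diff)
  show "F 1 - F (-1) = (if K = 1 then pi/2 else 0)"
    unfolding F_def using a b by simp
qed

lemma part_limit:
  fixes K :: nat assumes K: "K \<ge> 1" and r: "-1 < r" "r < 1"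
  shows "((\<lambda>e. integral {-1..r-e} (\<lambda>s. sin (real K * arccos s)) + integral {r+e..1} (\<lambda>s. sin (real K * arccos s)))
     \<longlongrightarrow> (if K = 1 then pi/2 else 0)) (at_right 0)"
proof -
  define F where "F \<equiv> \<lambda>s. (sin ((real K + 1) * arccos s) / (real K + 1) -
      (if K = 1 then arccos s else sin ((real K - 1) * arccos s) / (real K - 1))) / 2"
  note A = sin_arccos_antideriv[OF K, folded F_def]
  have ic: "isCont F r"
    using A(1) r continuous_on_eq_continuous_at[of "{-1<..<1}" F]
    by (meson continuous_on_subset greaterThanLessThan_iff greaterThanLessThan_subseteq_atLeastAtMost_iff open_greaterThanLessThan order_refl)
  have l1: "((\<lambda>e. F (r - e)) \<longlongrightarrow> F r) (at_right 0)"
    by (rule isCont_tendsto_compose[OF ic]) (auto intro!: tendsto_eq_intros)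
  have l2: "((\<lambda>e. F (r + e)) \<longlongrightarrow> F r) (at_right 0)"
    by (rule isCont_tendsto_compose[OF ic]) (auto intro!: tendsto_eq_intros)
  have "((\<lambda>e. integral {-1..r-e} (\<lambda>s. sin (real K * arccos s)) + integral {r+e..1} (\<lambda>s. sin (real K * arccos s)))
     \<longlongrightarrow> F 1 - F (-1)) (at_right 0)"
  proof (rule pv_limit[OF r])
    show "continuous_on ({- 1..1} - {r}) F" using A(1) by (rule continuous_on_subset) auto
    show "((\<lambda>e. F (r - e) - F (r + e)) \<longlongrightarrow> 0) (at_right 0)"
      using tendsto_diff[OF l1 l2] by simp
  qed (use A(2) in auto)
  moreover have v: "F 1 - F (-1) = (if K = 1 then pi/2 else 0)" using A(3) unfolding F_def by simp
  ultimately show ?thesis by simp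
qed

lemma int_left:
  assumes "b < r" "r < 1"
  shows "(\<lambda>s. sin (c * arccos s) / (s - r)) integrable_on {-1..b}"
  using assms by (intro integrable_continuous_interval continuous_intros) auto

lemma int_right:
  assumes "-1 < r" "r < a"
  shows "(\<lambda>s. sin (c * arccos s) / (s - r)) integrable_on {a..1}"
  using assms by (intro integrable_continuous_interval continuous_intros) auto

lemma int_plain:
  assumes "-1 \<le> a" "b \<le> 1"
  shows "(\<lambda>s. sin (c * arccos s)) integrable_on {a..b}"
  using assms by (intro integrable_continuous_interval continuous_intros) auto

lemma sin_rec: "sin ((c + 2) * x) = 2 * cos x * sin ((c + 1) * x) - sin (c * (x::real))"
proof -
  have "sin ((c+1)*x + x) + sin ((c+1)*x - x) = 2 * cos x * sin ((c+1)*x)"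
    by (simp add: sin_add sin_diff)
  moreover have "(c+1)*x + x = (c+2)*x" "(c+1)*x - x = c*x" by algebra+
  ultimately show ?thesis by simp
qed

lemma gen_div: "x - r \<noteq> 0 \<Longrightarrow> (2 * x * a - b) / (x - r) = 2 * r * (a / (x - r)) - b / (x - r) + 2 * (a::real)"
proof -
  assume h: "x - r \<noteq> 0"
  have "(2 * x * a - b) / (x - r) = ((2 * r * a - b) + 2 * a * (x - r)) / (x - r)" by (simp add: algebra_simps)
  also have "... = (2 * r * a - b) / (x - r) + 2 * a" using h by (simp add: add_divide_distrib)
  also have "... = 2 * r * (a / (x - r)) - b / (x - r) + 2 * a" by (simp add: diff_divide_distrib)
  finally show ?thesis .
qed

lemma piece_rec:
  fixes X :: "real set" and c :: real
  assumes X: "X \<subseteq> {-1..1}" "r \<notin> X"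
    and i1: "(\<lambda>s. sin ((c+1) * arccos s) / (s - r)) integrable_on X"
    and i0: "(\<lambda>s. sin (c * arccos s) / (s - r)) integrable_on X"
    and ip: "(\<lambda>s. sin ((c+1) * arccos s)) integrable_on X"
  shows "integral X (\<lambda>s. sin ((c+2) * arccos s) / (s - r)) =
     2 * r * integral X (\<lambda>s. sin ((c+1) * arccos s) / (s - r)) - integral X (\<lambda>s. sin (c * arccos s) / (s - r))
     + 2 * integral X (\<lambda>s. sin ((c+1) * arccos s))"
proof -
  have "integral X (\<lambda>s. sin ((c+2) * arccos s) / (s - r)) =
      integral X (\<lambda>s. (2 * r) * (sin ((c+1) * arccos s) / (s - r)) - sin (c * arccos s) / (s - r)
        + 2 * sin ((c+1) * arccos s))"
  proof (rule integral_cong)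
    fix s assume s: "s \<in> X"
    then have s1: "-1 \<le> s" "s \<le> 1" and sr: "s - r \<noteq> 0" using X by auto
    show "sin ((c+2) * arccos s) / (s - r) = (2 * r) * (sin ((c+1) * arccos s) / (s - r)) - sin (c * arccos s) / (s - r)
        + 2 * sin ((c+1) * arccos s)"
      unfolding sin_rec[of c "arccos s"] cos_arccos[OF s1] by (rule gen_div[OF sr])
  qed
  also have "... = 2 * r * integral X (\<lambda>s. sin ((c+1) * arccos s) / (s - r)) - integral X (\<lambda>s. sin (c * arccos s) / (s - r))
     + 2 * integral X (\<lambda>s. sin ((c+1) * arccos s))"
  proof -
    define f1 where "f1 = (\<lambda>s. sin ((c+1) * arccos s) / (s - r))"
    define f0 where "f0 = (\<lambda>s. sin (c * arccos s) / (s - r))"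
    define fp where "fp = (\<lambda>s. sin ((c+1) * arccos s))"
    have j1: "f1 integrable_on X" "f0 integrable_on X" "fp integrable_on X" using i1 i0 ip unfolding f1_def f0_def fp_def by auto
    have "integral X (\<lambda>s. 2 * r * f1 s - f0 s + 2 * fp s) = 2 * r * integral X f1 - integral X f0 + 2 * integral X fp"
      by (intro integral_unique has_integral_add has_integral_diff has_integral_mult_right integrable_integral j1)
    then show ?thesis unfolding f1_def f0_def fp_def by simp
  qed
  finally show ?thesis .
qed

lemma DERIV_ln_abs_shift:
  assumes "x \<noteq> (r::real)"
  shows "((\<lambda>s. ln \<bar>s - r\<bar>) has_real_derivative 1 / (x - r)) (at x)"
proof (cases "x > r")
  case True
  have "((\<lambda>s. ln (s - r)) has_real_derivative 1 / (x - r)) (at x)"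
    using True by (auto intro!: derivative_eq_intros)
  then show ?thesis
    by (rule has_field_derivative_transform_within_open[where S="{r<..}"]) (use True in auto)
next
  case False
  then have F: "x < r" using assms by auto
  have "((\<lambda>s. ln (r - s)) has_real_derivative 1 / (x - r)) (at x)"
    using F by (auto intro!: derivative_eq_intros simp: field_simps)
  then show ?thesis
    by (rule has_field_derivative_transform_within_open[where S="{..<r}"]) (use F in auto)
qed

lemma key_alg:
  fixes s r w a N :: real
  assumes w: "w > 0" and N: "N = 1 - r * s + a * w" "N \<noteq> 0" and sr: "s \<noteq> r"
    and w2: "w^2 = 1 - s^2" and a2: "a^2 = 1 - r^2"
  shows "- (s / w) - r / w - a * ((- r - a * (s / w)) / N) + a / (s - r) = w / (s - r)"
proof -
  have sr': "s - r \<noteq> 0" using sr by simp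
  have e: "-(s + r) * (s - r) * N + a * (s - r) * (r * w + a * s) + a * w * N = w^2 * N"
    unfolding N(1) using w2 a2 by algebra
  show ?thesis using w N(2) sr' e w2 a2 by (simp add: field_simps) algebra
qed

lemma pv_base:
  assumes r: "-1 < r" "r < 1"
  shows "((\<lambda>e. pvtr (\<lambda>s. sin (arccos s)) r e) \<longlongrightarrow> - pi * r) (at_right 0)"
proof -
  define a where "a = sqrt (1 - r^2)"
  define H where "H = (\<lambda>s. sqrt (1 - s^2) - r * arcsin s - a * ln (1 - r * s + a * sqrt (1 - s^2)))"
  define G where "G = (\<lambda>s. H s + a * ln \<bar>s - r\<bar>)"
  have r2: "r^2 < 1" using r by (simp add: abs_square_less_1)
  have a2: "a^2 = 1 - r^2" unfolding a_def using r2 by simp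
  have a0: "a > 0" unfolding a_def using r2 by simp
  have Np: "1 - r * s + a * sqrt (1 - s^2) > 0" if s: "-1 \<le> s" "s \<le> 1" for s
  proof -
    have "\<bar>r * s\<bar> \<le> \<bar>r\<bar>" unfolding abs_mult using s by (simp add: mult_left_le)
    then have "r * s < 1" using r by linarith
    moreover have "s^2 \<le> 1" using s by (simp add: abs_square_le_1)
    then have "a * sqrt (1 - s^2) \<ge> 0" using a0 by simp
    ultimately show ?thesis by linarith
  qed
  have Hc: "continuous_on {-1..1} H"
    unfolding H_def using Np by (intro continuous_intros) (auto simp: less_imp_neq[symmetric])
  have Gc: "continuous_on ({-1..1} - {r}) G"
    unfolding G_def by (intro continuous_intros continuous_on_subset[OF Hc]) auto
  have Gd: "(G has_real_derivative (\<lambda>s. sin (arccos s) / (s - r)) s) (at s)"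
    if s: "-1 < s" "s < 1" "s \<noteq> r" for s
  proof -
    define w where "w = sqrt (1 - s^2)"
    have s2: "s^2 < 1" using s by (simp add: abs_square_less_1)
    have w0: "w > 0" unfolding w_def using s2 by simp
    have w2: "w^2 = 1 - s^2" unfolding w_def using s2 by simp
    define N where "N = 1 - r * s + a * w"
    have N0: "N > 0" unfolding N_def w_def using Np s by auto
    have d1: "((\<lambda>s. sqrt (1 - s^2)) has_real_derivative -(s/w)) (at s)"
      using s2 w0 unfolding w_def by (auto intro!: derivative_eq_intros simp: field_simps)
    have d2: "(arcsin has_real_derivative 1/w) (at s)"
      using DERIV_arcsin[of s] s unfolding w_def by (simp add: divide_inverse)
    have d3: "((\<lambda>s. ln (1 - r * s + a * sqrt (1 - s^2))) has_real_derivative ((- r - a * (s / w)) / N)) (at s)"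
      using d1 N0 s2 unfolding N_def w_def by (auto intro!: derivative_eq_intros simp: field_simps)
    have d4: "((\<lambda>s. ln \<bar>s - r\<bar>) has_real_derivative 1 / (s - r)) (at s)"
      using s by (intro DERIV_ln_abs_shift) auto
    have "(G has_real_derivative (-(s/w) - r * (1/w) - a * ((- r - a * (s / w)) / N) + a * (1 / (s - r)))) (at s)"
    proof -
      have e2: "((\<lambda>z. r * arcsin z) has_real_derivative r * (1 / w)) (at s)" by (rule DERIV_cmult[OF d2])
      have e3: "((\<lambda>z. a * ln (1 - r * z + a * sqrt (1 - z\<^sup>2))) has_real_derivative a * ((- r - a * (s / w)) / N)) (at s)"
        by (rule DERIV_cmult[OF d3])
      have e4: "((\<lambda>z. a * ln \<bar>z - r\<bar>) has_real_derivative a * (1 / (s - r))) (at s)" by (rule DERIV_cmult[OF d4])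
      show ?thesis unfolding G_def H_def by (intro DERIV_add DERIV_diff d1 e2 e3 e4)
    qed
    moreover have "-(s/w) - r * (1/w) - a * ((- r - a * (s / w)) / N) + a * (1 / (s - r)) = w / (s - r)"
      using key_alg[OF w0 N_def _ s(3) w2 a2] N0 by simp
    moreover have "sin (arccos s) = w" unfolding w_def using s by (simp add: sin_arccos)
    ultimately show ?thesis by simp
  qed
  have ic: "isCont H r"
    using Hc r continuous_on_eq_continuous_at[of "{-1<..<1}" H]
    by (meson continuous_on_subset greaterThanLessThan_iff greaterThanLessThan_subseteq_atLeastAtMost_iff open_greaterThanLessThan order_refl)
  have l1: "((\<lambda>e. H (r - e)) \<longlongrightarrow> H r) (at_right 0)"
    by (rule isCont_tendsto_compose[OF ic]) (auto intro!: tendsto_eq_intros)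
  have l2: "((\<lambda>e. H (r + e)) \<longlongrightarrow> H r) (at_right 0)"
    by (rule isCont_tendsto_compose[OF ic]) (auto intro!: tendsto_eq_intros)
  have lim: "((\<lambda>e. G (r - e) - G (r + e)) \<longlongrightarrow> 0) (at_right 0)"
    unfolding G_def using tendsto_diff[OF l1 l2] by simp
  have "((\<lambda>e. integral {-1..r-e} (\<lambda>s. sin (arccos s) / (s - r)) + integral {r+e..1} (\<lambda>s. sin (arccos s) / (s - r)))
     \<longlongrightarrow> G 1 - G (-1)) (at_right 0)"
    by (rule pv_limit[OF r Gc _ lim]) (use Gd in auto)
  moreover have "G 1 - G (-1) = - pi * r"
    using r unfolding G_def H_def by (simp add: algebra_simps)
  ultimately show ?thesis unfolding pvtr_def by simp
qed

lemma cos_rec: "cos ((c + 2) * x) = 2 * cos x * cos ((c + 1) * x) - cos (c * (x::real))"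
proof -
  have "cos ((c+1)*x + x) + cos ((c+1)*x - x) = 2 * cos x * cos ((c+1)*x)"
    by (simp add: cos_add cos_diff)
  moreover have "(c+1)*x + x = (c+2)*x" "(c+1)*x - x = c*x" by algebra+
  ultimately show ?thesis by simp
qed

lemma pvtr_rec:
  assumes r: "-1 < r" "r < 1" and e: "e > 0"
  shows "pvtr (\<lambda>s. sin ((real k + 2) * arccos s)) r e =
    2 * r * pvtr (\<lambda>s. sin ((real k + 1) * arccos s)) r e - pvtr (\<lambda>s. sin (real k * arccos s)) r e
    + 2 * (integral {-1..r-e} (\<lambda>s. sin ((real k + 1) * arccos s)) + integral {r+e..1} (\<lambda>s. sin ((real k + 1) * arccos s)))"
proof -
  have A: "integral {-1..r-e} (\<lambda>s. sin ((real k + 2) * arccos s) / (s - r)) =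
     2 * r * integral {-1..r-e} (\<lambda>s. sin ((real k + 1) * arccos s) / (s - r)) - integral {-1..r-e} (\<lambda>s. sin (real k * arccos s) / (s - r))
     + 2 * integral {-1..r-e} (\<lambda>s. sin ((real k + 1) * arccos s))"
    using r e by (intro piece_rec int_left int_plain) auto
  have B: "integral {r+e..1} (\<lambda>s. sin ((real k + 2) * arccos s) / (s - r)) =
     2 * r * integral {r+e..1} (\<lambda>s. sin ((real k + 1) * arccos s) / (s - r)) - integral {r+e..1} (\<lambda>s. sin (real k * arccos s) / (s - r))
     + 2 * integral {r+e..1} (\<lambda>s. sin ((real k + 1) * arccos s))"
    using r e by (intro piece_rec int_right int_plain) auto
  show ?thesis unfolding pvtr_def A B by (simp add: algebra_simps)
qed

lemma pv_sin:
  assumes r: "-1 < r" "r < 1"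
  shows "((\<lambda>e. pvtr (\<lambda>s. sin (real K * arccos s)) r e) \<longlongrightarrow>
     (if K = 0 then 0 else - pi * cos (real K * arccos r))) (at_right 0)"
proof (induction K rule: less_induct)
  case (less K)
  consider "K = 0" | "K = 1" | k where "K = k + 2"
    by (metis One_nat_def add_2_eq_Suc' not0_implies_Suc)
  then show ?case
  proof cases
    case 1
    then show ?thesis by (simp add: pvtr_def)
  next
    case 2
    then show ?thesis using pv_base[OF r] r by simp
  next
    case 3
    have Lk: "((\<lambda>e. pvtr (\<lambda>s. sin (real k * arccos s)) r e) \<longlongrightarrow>
      (if k = 0 then 0 else - pi * cos (real k * arccos r))) (at_right 0)"
      using less[of k] 3 by simp
    have Lk1': "((\<lambda>e. pvtr (\<lambda>s. sin (real (k+1) * arccos s)) r e) \<longlongrightarrow>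
      (if k + 1 = 0 then 0 else - pi * cos (real (k+1) * arccos r))) (at_right 0)"
      using less[of "k+1"] 3 by simp
    then have Lk1: "((\<lambda>e. pvtr (\<lambda>s. sin ((real k + 1) * arccos s)) r e) \<longlongrightarrow>
      - pi * cos ((real k + 1) * arccos r)) (at_right 0)"
      by (simp add: add.commute)
    have P': "((\<lambda>e. integral {-1..r-e} (\<lambda>s. sin (real (k+1) * arccos s)) + integral {r+e..1} (\<lambda>s. sin (real (k+1) * arccos s)))
      \<longlongrightarrow> (if k + 1 = 1 then pi/2 else 0)) (at_right 0)"
      by (rule part_limit[OF _ r]) simp
    then have P: "((\<lambda>e. integral {-1..r-e} (\<lambda>s. sin ((real k + 1) * arccos s)) + integral {r+e..1} (\<lambda>s. sin ((real k + 1) * arccos s)))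
      \<longlongrightarrow> (if k = 0 then pi/2 else 0)) (at_right 0)"
      by (simp add: add.commute)
    have T: "((\<lambda>e. 2 * r * pvtr (\<lambda>s. sin ((real k + 1) * arccos s)) r e - pvtr (\<lambda>s. sin (real k * arccos s)) r e
      + 2 * (integral {-1..r-e} (\<lambda>s. sin ((real k + 1) * arccos s)) + integral {r+e..1} (\<lambda>s. sin ((real k + 1) * arccos s))))
      \<longlongrightarrow> 2 * r * (- pi * cos ((real k + 1) * arccos r)) - (if k = 0 then 0 else - pi * cos (real k * arccos r))
        + 2 * (if k = 0 then pi/2 else 0)) (at_right 0)"
      by (intro tendsto_add tendsto_diff tendsto_mult tendsto_const Lk Lk1 P)
    have ev: "eventually (\<lambda>e. 2 * r * pvtr (\<lambda>s. sin ((real k + 1) * arccos s)) r e - pvtr (\<lambda>s. sin (real k * arccos s)) r e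
      + 2 * (integral {-1..r-e} (\<lambda>s. sin ((real k + 1) * arccos s)) + integral {r+e..1} (\<lambda>s. sin ((real k + 1) * arccos s)))
      = pvtr (\<lambda>s. sin (real K * arccos s)) r e) (at_right 0)"
    proof -
      have "eventually (\<lambda>e. e \<in> {0<..<1::real}) (at_right 0)" by (rule eventually_at_right_real) simp
      then show ?thesis
      proof (rule eventually_mono)
        fix e :: real assume "e \<in> {0<..<1}"
        then have e: "e > 0" by simp
        show "2 * r * pvtr (\<lambda>s. sin ((real k + 1) * arccos s)) r e - pvtr (\<lambda>s. sin (real k * arccos s)) r e
          + 2 * (integral {-1..r-e} (\<lambda>s. sin ((real k + 1) * arccos s)) + integral {r+e..1} (\<lambda>s. sin ((real k + 1) * arccos s)))
          = pvtr (\<lambda>s. sin (real K * arccos s)) r e"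
          using pvtr_rec[OF r e, of k] 3 by (simp add: add.commute)
      qed
    qed
    have val: "2 * r * (- pi * cos ((real k + 1) * arccos r)) - (if k = 0 then 0 else - pi * cos (real k * arccos r))
        + 2 * (if k = 0 then pi/2 else 0) = (if K = 0 then 0 else - pi * cos (real K * arccos r))"
    proof -
      have c: "cos ((real k + 2) * arccos r) = 2 * r * cos ((real k + 1) * arccos r) - cos (real k * arccos r)"
        using cos_rec[of "real k" "arccos r"] r by simp
      then have c2: "pi * cos ((real k + 2) * arccos r) = pi * (2 * r * cos ((real k + 1) * arccos r)) - pi * cos (real k * arccos r)"
        by (simp add: right_diff_distrib)
      show ?thesis using 3 c2 by (cases "k = 0") (auto simp: algebra_simps)
    qed
    show ?thesis using tendsto_cong[OF ev] T val by simp
  qed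
qed

lemma gen_derivs:
  fixes a b s :: "real \<Rightarrow> real" and K r :: real
  assumes da: "(a has_real_derivative -K*b r/s r) (at r)"
    and db: "(b has_real_derivative K*a r/s r) (at r)"
    and ds: "(s has_real_derivative -r/s r) (at r)"
    and s0: "s r \<noteq> 0"
  shows "((\<lambda>x. K*a x/s x) has_real_derivative K*(-K*b r/s r^2 + r*a r/s r^3)) (at r)"
    and "((\<lambda>x. K*(-K*b x/s x^2 + x*a x/s x^3)) has_real_derivative
          K * (- (K^2) * a r / s r ^ 3 - 3 * K * r * b r / s r ^ 4 + a r / s r ^ 3 + 3 * r^2 * a r / s r ^ 5)) (at r)"
proof -
  show "((\<lambda>x. K*a x/s x) has_real_derivative K*(-K*b r/s r^2 + r*a r/s r^3)) (at r)"
    using s0 by (auto intro!: derivative_eq_intros da db ds simp: field_simps power2_eq_square power3_eq_cube)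
  show "((\<lambda>x. K*(-K*b x/s x^2 + x*a x/s x^3)) has_real_derivative
          K * (- (K^2) * a r / s r ^ 3 - 3 * K * r * b r / s r ^ 4 + a r / s r ^ 3 + 3 * r^2 * a r / s r ^ 5)) (at r)"
    using s0 by (auto intro!: derivative_eq_intros da db ds simp: field_simps eval_nat_numeral)
qed

lemma basic_derivs:
  fixes K r :: real assumes r: "-1 < r" "r < 1"
  shows "((\<lambda>x. sin (K * arccos x)) has_real_derivative -K*cos (K * arccos r)/sqrt (1 - r^2)) (at r)"
    and "((\<lambda>x. cos (K * arccos x)) has_real_derivative K* sin (K * arccos r)/sqrt (1 - r^2)) (at r)"
    and "((\<lambda>x. sqrt (1 - x^2)) has_real_derivative -r/sqrt (1 - r^2)) (at r)"
proof -
  have r2: "r^2 < 1" using r by (simp add: abs_square_less_1)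
  show "((\<lambda>x. sin (K * arccos x)) has_real_derivative -K*cos (K * arccos r)/sqrt (1 - r^2)) (at r)"
    using r r2 by (auto intro!: derivative_eq_intros DERIV_arccos simp: field_simps)
  show "((\<lambda>x. cos (K * arccos x)) has_real_derivative K* sin (K * arccos r)/sqrt (1 - r^2)) (at r)"
    using r r2 by (auto intro!: derivative_eq_intros DERIV_arccos simp: field_simps)
  show "((\<lambda>x. sqrt (1 - x^2)) has_real_derivative -r/sqrt (1 - r^2)) (at r)"
    using r r2 by (auto intro!: derivative_eq_intros simp: field_simps)
qed

lemma term_identity:
  fixes p :: nat and r :: real assumes r: "-1 < r" "r < 1"
  shows "(real p + 3) * (- ((real p + 3)^2) * sin ((real p + 3) * arccos r) / sqrt (1 - r^2) ^ 3
      - 3 * (real p + 3) * r * cos ((real p + 3) * arccos r) / sqrt (1 - r^2) ^ 4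
      + sin ((real p + 3) * arccos r) / sqrt (1 - r^2) ^ 3
      + 3 * r^2 * sin ((real p + 3) * arccos r) / sqrt (1 - r^2) ^ 5)
   = (real p + 3) * ((real p + 4) * (real p + 5) * chebU p r
         - (2 * (real p)\<^sup>2 + 12 * real p + 10) * chebU (p + 2) r
         + (real p + 2) * (real p + 1) * chebU (p + 4) r) / (4 * (1 - r^2)^2)"
proof -
  define K where "K = real p + 3"
  define t where "t = arccos r"
  define A where "A = sin (K * t)"
  define B where "B = cos (K * t)"
  define S where "S = sqrt (1 - r^2)"
  have r2: "r^2 < 1" using r by (simp add: abs_square_less_1)
  have S0: "S > 0" unfolding S_def using r2 by simp
  have S2: "S^2 = 1 - r^2" unfolding S_def using r2 by simp
  have st: "sin t = S" unfolding t_def S_def using r by (simp add: sin_arccos)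
  have ct: "cos t = r" unfolding t_def using r by simp
  have s2: "sin (2 * t) = 2 * S * r" using st ct by (simp add: sin_double)
  have c2: "cos (2 * t) = 2 * r^2 - 1" using ct by (simp add: cos_double_cos)
  have u0: "chebU p r = (A * (2 * r^2 - 1) - B * (2 * S * r)) / S"
  proof -
    have "(real p + 1) * t = K * t - 2 * t" unfolding K_def by algebra
    then have "sin ((real p + 1) * t) = A * (2 * r^2 - 1) - B * (2 * S * r)"
      unfolding A_def B_def by (simp add: sin_diff s2 c2)
    then show ?thesis unfolding chebU_def t_def[symmetric] st by simp
  qed
  have u2: "chebU (p + 2) r = A / S"
  proof -
    have e: "(real (p + 2) + 1) * t = K * t" unfolding K_def by simp
    show ?thesis by (simp only: chebU_def t_def[symmetric] st A_def e)
  qed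
  have u4: "chebU (p + 4) r = (A * (2 * r^2 - 1) + B * (2 * S * r)) / S"
  proof -
    have "(real (p + 4) + 1) * t = K * t + 2 * t" unfolding K_def by (simp add: algebra_simps)
    then have "sin ((real (p + 4) + 1) * t) = A * (2 * r^2 - 1) + B * (2 * S * r)"
      unfolding A_def B_def by (simp add: sin_add s2 c2)
    then show ?thesis unfolding chebU_def t_def[symmetric] st by simp
  qed
  have rr: "1 - r^2 = S^2" using S2 by simp
  have pK: "real p = K - 3" unfolding K_def by simp
  show ?thesis
    unfolding u0 u2 u4 rr K_def[symmetric] t_def[symmetric] S_def[symmetric] pK
    unfolding A_def[symmetric] B_def[symmetric]
    using S0 S2 by (simp add: field_simps A_def[symmetric] B_def[symmetric]) algebra
qed

lemma had_unfold:
  "hadamard_fp 4 D r = deriv (hadamard_fp 3 D) r / 3"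
  "hadamard_fp 3 D r = deriv (hadamard_fp 2 D) r / 2"
  "hadamard_fp 2 D r = deriv (hadamard_fp 1 D) r"
  "hadamard_fp 1 D r = cpv_int D r"
  by (simp_all add: numeral_eq_Suc)

lemma deriv_open:
  fixes f g :: "real \<Rightarrow> real"
  assumes "open S" "x \<in> S" "\<And>y. y \<in> S \<Longrightarrow> f y = g y" "(g has_real_derivative d) (at x)"
  shows "deriv f x = d"
proof -
  have "(f has_real_derivative d) (at x)"
    by (rule has_field_derivative_transform_within_open[OF assms(4) assms(1) assms(2)]) (simp add: assms(3))
  then show ?thesis by (rule DERIV_imp_deriv)
qed

lemma D_pointwise:
  fixes n M :: nat and s :: real
  assumes M: "M \<ge> 1" and s: "-1 \<le> s" "s \<le> 1"
  shows "chebU n s * (1 - s\<^sup>2) powr (real (M + 1) - 1/2) = sin ((real n + 1) * arccos s) * sin (arccos s) ^ (2 * M)"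
proof (cases "s = 1 \<or> s = -1")
  case True
  then have "1 - s^2 = 0" "sin (arccos s) = 0" by auto
  then show ?thesis using M by simp
next
  case False
  then have s': "-1 < s" "s < 1" using s by auto
  have s2: "s^2 < 1" using s' by (simp add: abs_square_less_1)
  define S where "S = sin (arccos s)"
  have S: "S = sqrt (1 - s^2)" unfolding S_def using s by (simp add: sin_arccos)
  have S0: "S > 0" unfolding S using s2 by simp
  have S2: "1 - s^2 = S^2" unfolding S using s2 by simp
  have "(1 - s\<^sup>2) powr (real (M + 1) - 1/2) = (1 - s\<^sup>2) powr (real M + 1/2)" by (simp add: add.commute)
  also have "... = (1 - s\<^sup>2) ^ M * sqrt (1 - s^2)"
    using s2 by (simp add: powr_add powr_realpow powr_half_sqrt)
  also have "... = S ^ (2 * M) * S" unfolding S2 using S0 by (simp add: power_mult)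
  finally have P: "(1 - s\<^sup>2) powr (real (M + 1) - 1/2) = S ^ (2 * M) * S" .
  show ?thesis unfolding P chebU_def S_def[symmetric] using S0 by (simp add: field_simps)
qed

definition F1 :: "real \<Rightarrow> real \<Rightarrow> real" where
  "F1 = (\<lambda>K x. K * sin (K * arccos x) / sqrt (1 - x^2))"
definition F2 :: "real \<Rightarrow> real \<Rightarrow> real" where
  "F2 = (\<lambda>K x. K * (- K * cos (K * arccos x) / (sqrt (1 - x^2))^2 + x * sin (K * arccos x) / sqrt (1 - x^2) ^ 3))"
definition F3 :: "real \<Rightarrow> real \<Rightarrow> real" where
  "F3 = (\<lambda>K x. K * (- (K^2) * sin (K * arccos x) / sqrt (1 - x^2) ^ 3
     - 3 * K * x * cos (K * arccos x) / sqrt (1 - x^2) ^ 4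
     + sin (K * arccos x) / sqrt (1 - x^2) ^ 3 + 3 * x^2 * sin (K * arccos x) / sqrt (1 - x^2) ^ 5))"

lemma F_derivs:
  fixes K r :: real assumes r: "-1 < r" "r < 1"
  shows "((\<lambda>x. cos (K * arccos x)) has_real_derivative F1 K r) (at r)"
    and "(F1 K has_real_derivative F2 K r) (at r)"
    and "(F2 K has_real_derivative F3 K r) (at r)"
proof -
  have r2: "r^2 < 1" using r by (simp add: abs_square_less_1)
  have s0: "sqrt (1 - r^2) \<noteq> 0" using r2 by simp
  note B1 = basic_derivs(1)[OF r, of K] and B2 = basic_derivs(2)[OF r, of K] and B3 = basic_derivs(3)[OF r]
  show "((\<lambda>x. cos (K * arccos x)) has_real_derivative F1 K r) (at r)"
    unfolding F1_def using B2 by simp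
  note G = gen_derivs[where a="\<lambda>x. sin (K * arccos x)" and b="\<lambda>x. cos (K * arccos x)"
      and s="\<lambda>x. sqrt (1 - x^2)" and K=K and r=r, OF B1 B2 B3 s0]
  show "(F1 K has_real_derivative F2 K r) (at r)"
    unfolding F1_def F2_def using G(1) by simp
  show "(F2 K has_real_derivative F3 K r) (at r)"
    unfolding F2_def F3_def using G(2) by simp
qed

theorem mainTheorem8:
  fixes m n :: nat and r :: real
  assumes "m \<ge> 2" and "n \<ge> 2 * m + 1" and "\<bar>r\<bar> < 1"
  shows "hadamard_fp 4 (\<lambda>s. chebU n s * (1 - s\<^sup>2) powr (real m - 1/2)) r =
    (-1) ^ m * (1/2) ^ (2 * m + 1) * (1/3) * (pi / (1 - r\<^sup>2)\<^sup>2) *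
    (\<Sum>j = 0..2 * m - 2.
       (let p = n - 2 * m + 2 * j in
        (-1) ^ j * real ((2 * m - 2) choose j) * (real p + 3) *
        ((real p + 4) * (real p + 5) * chebU p r
         - (2 * (real p)\<^sup>2 + 12 * real p + 10) * chebU (p + 2) r
         + (real p + 2) * (real p + 1) * chebU (p + 4) r)))"
proof -
  define M where "M = m - 1"
  have mM: "m = M + 1" and M1: "M \<ge> 1" using assms(1) unfolding M_def by auto
  have r: "-1 < r" "r < 1" using assms(3) by auto
  define D where "D = (\<lambda>s. chebU n s * (1 - s\<^sup>2) powr (real m - 1/2))"
  define c where "c = (-1::real)^M / 4^M"
  define coef where "coef = (\<lambda>j. c * ((-1)^j * real (2*M choose j)))"
  define Kn where "Kn = (\<lambda>j::nat. n - 2*m + 2*j + 3)"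
  have Knr: "real (Kn j) = real n + 1 + (2 * real j - 2 * real M)" for j
    unfolding Kn_def using assms(2) mM by (simp add: of_nat_diff)
  have Dexp: "D s = (\<Sum>j\<le>2*M. coef j * sin (real (Kn j) * arccos s))" if s: "-1 \<le> s" "s \<le> 1" for s
  proof -
    have "D s = sin ((real n + 1) * arccos s) * sin (arccos s) ^ (2 * M)"
      unfolding D_def using D_pointwise[OF M1 s, of n] mM by simp
    also have "... = c * (\<Sum>j\<le>2*M. (-1)^j * real (2*M choose j) * sin ((real n + 1) * arccos s + (2 * real j - 2 * real M) * arccos s))"
      unfolding c_def by (rule sin_pow_expand)
    also have "... = (\<Sum>j\<le>2*M. coef j * sin (real (Kn j) * arccos s))"
      unfolding sum_distrib_left coef_def
      by (rule sum.cong[OF refl]) (simp add: Knr algebra_simps)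
    finally show ?thesis .
  qed
  have pvD: "pvtr D y e = (\<Sum>j\<le>2*M. coef j * pvtr (\<lambda>s. sin (real (Kn j) * arccos s)) y e)"
    if y: "-1 < y" "y < 1" and e: "e > 0" for y e
  proof -
    have L: "integral {-1..y-e} (\<lambda>s. D s / (s - y)) = (\<Sum>j\<le>2*M. coef j * integral {-1..y-e} (\<lambda>s. sin (real (Kn j) * arccos s) / (s - y)))"
    proof -
      have "integral {-1..y-e} (\<lambda>s. D s / (s - y)) = integral {-1..y-e} (\<lambda>s. \<Sum>j\<le>2*M. coef j * (sin (real (Kn j) * arccos s) / (s - y)))"
        by (rule integral_cong) (use y e in \<open>auto simp: Dexp sum_divide_distrib\<close>)
      also have "... = (\<Sum>j\<le>2*M. integral {-1..y-e} (\<lambda>s. coef j * (sin (real (Kn j) * arccos s) / (s - y))))"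
        by (rule integral_sum, simp, rule integrable_on_mult_right, rule int_left) (use y e in auto)
      finally show ?thesis by (simp only: integral_mult_right)
    qed
    have R: "integral {y+e..1} (\<lambda>s. D s / (s - y)) = (\<Sum>j\<le>2*M. coef j * integral {y+e..1} (\<lambda>s. sin (real (Kn j) * arccos s) / (s - y)))"
    proof -
      have "integral {y+e..1} (\<lambda>s. D s / (s - y)) = integral {y+e..1} (\<lambda>s. \<Sum>j\<le>2*M. coef j * (sin (real (Kn j) * arccos s) / (s - y)))"
        by (rule integral_cong) (use y e in \<open>auto simp: Dexp sum_divide_distrib\<close>)
      also have "... = (\<Sum>j\<le>2*M. integral {y+e..1} (\<lambda>s. coef j * (sin (real (Kn j) * arccos s) / (s - y))))"
        by (rule integral_sum, simp, rule integrable_on_mult_right, rule int_right) (use y e in auto)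
      finally show ?thesis by (simp only: integral_mult_right)
    qed
    show ?thesis unfolding pvtr_def L R by (simp add: sum.distrib distrib_left)
  qed
  have cpvD: "cpv_int D y = (\<Sum>j\<le>2*M. coef j * (- pi * cos (real (Kn j) * arccos y)))"
    if y: "-1 < y" "y < 1" for y
  proof -
    have T: "((\<lambda>e. \<Sum>j\<le>2*M. coef j * pvtr (\<lambda>s. sin (real (Kn j) * arccos s)) y e) \<longlongrightarrow>
        (\<Sum>j\<le>2*M. coef j * (- pi * cos (real (Kn j) * arccos y)))) (at_right 0)"
    proof (intro tendsto_sum tendsto_mult tendsto_const)
      fix j
      show "((\<lambda>e. pvtr (\<lambda>s. sin (real (Kn j) * arccos s)) y e) \<longlongrightarrow> - pi * cos (real (Kn j) * arccos y)) (at_right 0)"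
        using pv_sin[OF y, of "Kn j"] unfolding Kn_def by simp
    qed
    have ev: "eventually (\<lambda>e. (\<Sum>j\<le>2*M. coef j * pvtr (\<lambda>s. sin (real (Kn j) * arccos s)) y e) = pvtr D y e) (at_right 0)"
    proof -
      have "eventually (\<lambda>e. e \<in> {0<..<1::real}) (at_right 0)" by (rule eventually_at_right_real) simp
      then show ?thesis by (rule eventually_mono) (use pvD[OF y] in auto)
    qed
    have "((\<lambda>e. pvtr D y e) \<longlongrightarrow> (\<Sum>j\<le>2*M. coef j * (- pi * cos (real (Kn j) * arccos y)))) (at_right 0)"
      using tendsto_cong[OF ev] T by simp
    moreover have "cpv_int D y = Lim (at_right 0) (\<lambda>e. pvtr D y e)"
      unfolding cpv_int_def pvtr_def by simp
    ultimately show ?thesis using tendsto_Lim[OF trivial_limit_at_right_real] by simp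
  qed
  define Kr where "Kr = (\<lambda>j. real (Kn j))"
  define P0 where "P0 = (\<lambda>x. \<Sum>j\<le>2*M. coef j * (- pi * cos (Kr j * arccos x)))"
  define P1 where "P1 = (\<lambda>x. \<Sum>j\<le>2*M. coef j * (- pi * F1 (Kr j) x))"
  define P2 where "P2 = (\<lambda>x. \<Sum>j\<le>2*M. coef j * (- pi * F2 (Kr j) x))"
  define P3 where "P3 = (\<lambda>x. \<Sum>j\<le>2*M. coef j * (- pi * F3 (Kr j) x))"
  define S where "S = {-1<..<(1::real)}"
  have So: "open S" unfolding S_def by simp
  have rS: "r \<in> S" unfolding S_def using r by simp
  have dP0: "(P0 has_real_derivative P1 y) (at y)" if "y \<in> S" for y
    unfolding P0_def P1_def using that unfolding S_def
    by (intro DERIV_sum DERIV_cmult F_derivs(1)) auto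
  have dP1: "(P1 has_real_derivative P2 y) (at y)" if "y \<in> S" for y
    unfolding P1_def P2_def using that unfolding S_def
    by (intro DERIV_sum DERIV_cmult F_derivs(2)) auto
  have dP2: "((\<lambda>x. P2 x / 2) has_real_derivative P3 y / 2) (at y)" if "y \<in> S" for y
    unfolding P2_def P3_def using that unfolding S_def
    by (intro DERIV_cdivide DERIV_sum DERIV_cmult F_derivs(3)) auto
  have H1: "hadamard_fp 1 D y = P0 y" if "y \<in> S" for y
    using that unfolding had_unfold P0_def Kr_def S_def by (simp add: cpvD)
  have H2: "hadamard_fp 2 D y = P1 y" if "y \<in> S" for y
    unfolding had_unfold(3) by (rule deriv_open[OF So that H1 dP0[OF that]])
  have H3: "hadamard_fp 3 D y = P2 y / 2" if "y \<in> S" for y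
    unfolding had_unfold(2) using deriv_open[OF So that H2 dP1[OF that]] by simp
  have H4: "hadamard_fp 4 D r = P3 r / 2 / 3"
    unfolding had_unfold(1) using deriv_open[OF So rS H3 dP2[OF rS]] by simp
  have rr2: "r^2 < 1" using assms(3) by (simp add: abs_square_less_1)
  then have r2: "1 - r^2 \<noteq> 0" by simp
  have pw1: "(-1::real)^m = - ((-1)^M)" using mM by simp
  have pw2: "(1/2::real)^(2*m+1) = 1 / (8 * 4^M)"
    using mM by (simp add: power_add power_mult power_one_over)
  have idx: "{0..2 * m - 2} = {..2*M}" using mM by auto
  have per: "coef j * (- pi * F3 (Kr j) r) / 2 / 3 =
      (-1) ^ m * (1/2) ^ (2 * m + 1) * (1/3) * (pi / (1 - r\<^sup>2)\<^sup>2) *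
       (let p = n - 2 * m + 2 * j in
        (-1) ^ j * real ((2 * m - 2) choose j) * (real p + 3) *
        ((real p + 4) * (real p + 5) * chebU p r
         - (2 * (real p)\<^sup>2 + 12 * real p + 10) * chebU (p + 2) r
         + (real p + 2) * (real p + 1) * chebU (p + 4) r))" for j
  proof -
    define p where "p = n - 2 * m + 2 * j"
    have Kp: "Kr j = real p + 3" unfolding Kr_def Kn_def p_def by simp
    have TI: "F3 (Kr j) r = (real p + 3) * ((real p + 4) * (real p + 5) * chebU p r
         - (2 * (real p)\<^sup>2 + 12 * real p + 10) * chebU (p + 2) r
         + (real p + 2) * (real p + 1) * chebU (p + 4) r) / (4 * (1 - r^2)^2)"
      unfolding Kp F3_def using term_identity[OF r, of p] by simp
    have m2: "2 * m - 2 = 2 * M" using mM by simp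
    show ?thesis unfolding Let_def p_def[symmetric] TI pw1 pw2 m2 coef_def c_def
      using r2 by (simp add: field_simps)
  qed
  have "hadamard_fp 4 (\<lambda>s. chebU n s * (1 - s\<^sup>2) powr (real m - 1/2)) r = P3 r / 2 / 3"
    using H4 unfolding D_def by simp
  also have "... = (\<Sum>j\<le>2*M. coef j * (- pi * F3 (Kr j) r) / 2 / 3)"
    unfolding P3_def by (simp add: sum_divide_distrib)
  also have "... = (\<Sum>j\<le>2*M. (-1) ^ m * (1/2) ^ (2 * m + 1) * (1/3) * (pi / (1 - r\<^sup>2)\<^sup>2) *
       (let p = n - 2 * m + 2 * j in
        (-1) ^ j * real ((2 * m - 2) choose j) * (real p + 3) *
        ((real p + 4) * (real p + 5) * chebU p r
         - (2 * (real p)\<^sup>2 + 12 * real p + 10) * chebU (p + 2) r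
         + (real p + 2) * (real p + 1) * chebU (p + 4) r)))"
    by (rule sum.cong[OF refl]) (rule per)
  also have "... = (-1) ^ m * (1/2) ^ (2 * m + 1) * (1/3) * (pi / (1 - r\<^sup>2)\<^sup>2) *
    (\<Sum>j\<le>2*M.
       (let p = n - 2 * m + 2 * j in
        (-1) ^ j * real ((2 * m - 2) choose j) * (real p + 3) *
        ((real p + 4) * (real p + 5) * chebU p r
         - (2 * (real p)\<^sup>2 + 12 * real p + 10) * chebU (p + 2) r
         + (real p + 2) * (real p + 1) * chebU (p + 4) r)))"
    by (simp only: sum_distrib_left)
  finally have X: "hadamard_fp 4 (\<lambda>s. chebU n s * (1 - s\<^sup>2) powr (real m - 1/2)) r =
    (-1) ^ m * (1/2) ^ (2 * m + 1) * (1/3) * (pi / (1 - r\<^sup>2)\<^sup>2) *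
    (\<Sum>j\<le>2*M.
       (let p = n - 2 * m + 2 * j in
        (-1) ^ j * real ((2 * m - 2) choose j) * (real p + 3) *
        ((real p + 4) * (real p + 5) * chebU p r
         - (2 * (real p)\<^sup>2 + 12 * real p + 10) * chebU (p + 2) r
         + (real p + 2) * (real p + 1) * chebU (p + 4) r)))" .
  show ?thesis unfolding idx by (rule X)
qed

end
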